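(* Let $J\subset I$ be an interval and $\widetilde\Lambda_J=\{(t,s)\in J\times J:t>s\}$. The following are equivalent: (i) for every $(t,s)\in\widetilde\Lambda_J$, $G(t,s)$ is a compact operator on $C_b(\mathbb R^d)$; (ii) for every $(t,s)\in\widetilde\Lambda_J$ and every $\varepsilon>0$ there is $R>0$ with $g_{t,s}(x,\mathbb R^d\setminus B(0,R))\le\varepsilon$ for all $x\in\mathbb R^d$.
   Context: Let $d\ge1$, $\alpha\in(0,1)$, $I\subseteq\mathbb R$ either $\mathbb R$ or a right half-line. For $t\in I$, $(\mathcal A(t)\psi)(x)=\sum_{i,j}q_{ij}(t,x)D_{ij}\psi(x)+\sum_ib_i(t,x)D_i\psi(x)-c(t,x)\psi(x)$, with: $q_{ij},b_i,c\in C^{\alpha/2,\alpha}_{\rm loc}(I\times\mathbb R^d)$; $\inf c>-\infty$; $Q=(q_{ij})$ symmetric with $\langle Q(t,x)\xi,\xi\rangle\ge\eta(t,x)|\xi|^2$, $\inf\eta>0$; for every bounded interval $J'\subset I$ there are positive $\varphi\in C^2(\mathbb R^d)$ with $\varphi\to+\infty$ at infinity and $\lambda$ with $\mathcal A(t)\varphi\le\lambda\varphi$ on $J'\times\mathbb R^d$. $G(t,s)$ is the evolution operator on $C_b(\mathbb R^d)$: $G(t,s)f=u_f(t,\cdot)$, $u_f$ the unique solution (bounded on strips, in $C([s,\infty)\times\mathbb R^d)\cap C^{1+\alpha/2,2+\alpha}_{\rm loc}((s,\infty)\times\mathbb R^d)$) of $D_tu=\mathcal A(t)u$, $u(s)=f$.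 It has a positive Green function $g$ with $(G(t,s)f)(x)=\int g(t,s,x,y)f(y)dy$, and $g_{t,s}(x,A):=\int_Ag(t,s,x,y)dy$ for Borel $A$, $t>s$. *)

theory Defs
  imports "HOL-Analysis.Analysis"
begin

definition pdx :: "'n::finite \<Rightarrow> (real^'n \<Rightarrow> real) \<Rightarrow> real^'n \<Rightarrow> real" where
  "pdx i f x = deriv (\<lambda>h. f (x + h *\<^sub>R axis i 1)) 0"

definition pdt :: "(real \<Rightarrow> real^'n \<Rightarrow> real) \<Rightarrow> real \<Rightarrow> real^'n \<Rightarrow> real" where
  "pdt u t x = deriv (\<lambda>\<tau>. u \<tau> x) t"

definition holder_loc :: "real \<Rightarrow> (real \<times> (real^'n)) set \<Rightarrow> (real \<Rightarrow> real^'n \<Rightarrow> real) \<Rightarrow> bool" where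
  "holder_loc \<alpha> S f \<longleftrightarrow> continuous_on S (\<lambda>(t,x). f t x) \<and>
     (\<forall>K. compact K \<and> K \<subseteq> S \<longrightarrow>
        (\<exists>C. \<forall>t x s y. (t,x) \<in> K \<and> (s,y) \<in> K \<longrightarrow>
             \<bar>f t x - f s y\<bar> \<le> C * (\<bar>t - s\<bar> powr (\<alpha>/2) + norm (x - y) powr \<alpha>)))"

definition C2 :: "(real^'n::finite \<Rightarrow> real) \<Rightarrow> bool" where
  "C2 f \<longleftrightarrow> continuous_on UNIV f \<and>
     (\<forall>i x. (\<lambda>h. f (x + h *\<^sub>R axis i 1)) field_differentiable (at 0)) \<and>
     (\<forall>i. continuous_on UNIV (pdx i f)) \<and>
     (\<forall>i j x. (\<lambda>h. pdx i f (x + h *\<^sub>R axis j 1)) field_differentiable (at 0)) \<and>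
     (\<forall>i j. continuous_on UNIV (pdx j (pdx i f)))"

definition Aop :: "(real \<Rightarrow> real^'n \<Rightarrow> real^'n^'n) \<Rightarrow> (real \<Rightarrow> real^'n \<Rightarrow> real^'n)
     \<Rightarrow> (real \<Rightarrow> real^'n \<Rightarrow> real) \<Rightarrow> real \<Rightarrow> (real^'n::finite \<Rightarrow> real) \<Rightarrow> real^'n \<Rightarrow> real" where
  "Aop q b c t \<psi> x =
     (\<Sum>i\<in>UNIV. \<Sum>j\<in>UNIV. q t x $ i $ j * pdx i (pdx j \<psi>) x)
     + (\<Sum>i\<in>UNIV. b t x $ i * pdx i \<psi> x) - c t x * \<psi> x"

definition standing :: "real set \<Rightarrow> real \<Rightarrow> (real \<Rightarrow> real^'n \<Rightarrow> real^'n^'n) \<Rightarrow> (real \<Rightarrow> real^'n \<Rightarrow> real^'n)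
     \<Rightarrow> (real \<Rightarrow> real^'n::finite \<Rightarrow> real) \<Rightarrow> bool" where
  "standing I \<alpha> q b c \<longleftrightarrow>
     0 < \<alpha> \<and> \<alpha> < 1 \<and>
     (I = UNIV \<or> (\<exists>a. I = {a..} \<or> I = {a<..})) \<and>
     (\<forall>i j. holder_loc \<alpha> (I \<times> UNIV) (\<lambda>t x. q t x $ i $ j)) \<and>
     (\<forall>i. holder_loc \<alpha> (I \<times> UNIV) (\<lambda>t x. b t x $ i)) \<and>
     holder_loc \<alpha> (I \<times> UNIV) c \<and>
     (\<exists>c0. \<forall>t\<in>I. \<forall>x. c t x \<ge> c0) \<and>
     (\<forall>t\<in>I. \<forall>x i j. q t x $ i $ j = q t x $ j $ i) \<and>
     (\<exists>\<eta>. (\<exists>\<eta>0>0. \<forall>t\<in>I. \<forall>x. \<eta> t x \<ge> \<eta>0) \<and>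
          (\<forall>t\<in>I. \<forall>x \<xi>. \<xi> \<bullet> (q t x *v \<xi>) \<ge> \<eta> t x * (norm \<xi>)\<^sup>2)) \<and>
     (\<forall>J'. is_interval J' \<and> bounded J' \<and> J' \<subseteq> I \<longrightarrow>
        (\<exists>\<phi> lam. C2 \<phi> \<and> (\<forall>x. \<phi> x > 0) \<and> filterlim \<phi> at_top at_infinity \<and>
              (\<forall>t\<in>J'. \<forall>x. Aop q b c t \<phi> x \<le> lam * \<phi> x)))"

definition is_sol :: "real \<Rightarrow> (real \<Rightarrow> real^'n \<Rightarrow> real^'n^'n) \<Rightarrow> (real \<Rightarrow> real^'n \<Rightarrow> real^'n)
     \<Rightarrow> (real \<Rightarrow> real^'n \<Rightarrow> real) \<Rightarrow> real \<Rightarrow> (real^'n::finite \<Rightarrow> real)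
     \<Rightarrow> (real \<Rightarrow> real^'n \<Rightarrow> real) \<Rightarrow> bool" where
  "is_sol \<alpha> q b c s f u \<longleftrightarrow>
     continuous_on ({s..} \<times> UNIV) (\<lambda>(t,x). u t x) \<and>
     (\<forall>T\<ge>s. bounded ((\<lambda>(t,x). u t x) ` ({s..T} \<times> UNIV))) \<and>
     (\<forall>t>s. \<forall>x. (\<lambda>\<tau>. u \<tau> x) field_differentiable (at t)) \<and>
     (\<forall>t>s. \<forall>x i. (\<lambda>h. u t (x + h *\<^sub>R axis i 1)) field_differentiable (at 0)) \<and>
     (\<forall>t>s. \<forall>x i j. (\<lambda>h. pdx i (u t) (x + h *\<^sub>R axis j 1)) field_differentiable (at 0)) \<and>
     holder_loc \<alpha> ({s<..} \<times> UNIV) u \<and>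
     holder_loc \<alpha> ({s<..} \<times> UNIV) (pdt u) \<and>
     (\<forall>i. holder_loc \<alpha> ({s<..} \<times> UNIV) (\<lambda>t. pdx i (u t))) \<and>
     (\<forall>i j. holder_loc \<alpha> ({s<..} \<times> UNIV) (\<lambda>t. pdx j (pdx i (u t)))) \<and>
     (\<forall>t>s. \<forall>x. pdt u t x = Aop q b c t (u t) x) \<and>
     u s = f"

definition bcont :: "('a::topological_space \<Rightarrow> real) \<Rightarrow> bool" where
  "bcont f \<longleftrightarrow> continuous_on UNIV f \<and> bounded (range f)"

definition well_posed :: "real set \<Rightarrow> real \<Rightarrow> (real \<Rightarrow> real^'n \<Rightarrow> real^'n^'n) \<Rightarrow> (real \<Rightarrow> real^'n \<Rightarrow> real^'n)
     \<Rightarrow> (real \<Rightarrow> real^'n::finite \<Rightarrow> real) \<Rightarrow> bool" where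
  "well_posed I \<alpha> q b c \<longleftrightarrow>
     (\<forall>s\<in>I. \<forall>f. bcont f \<longrightarrow>
        (\<exists>u. is_sol \<alpha> q b c s f u) \<and>
        (\<forall>u v. is_sol \<alpha> q b c s f u \<and> is_sol \<alpha> q b c s f v \<longrightarrow> (\<forall>t\<ge>s. u t = v t)))"

definition evol :: "real \<Rightarrow> (real \<Rightarrow> real^'n \<Rightarrow> real^'n^'n) \<Rightarrow> (real \<Rightarrow> real^'n \<Rightarrow> real^'n)
     \<Rightarrow> (real \<Rightarrow> real^'n \<Rightarrow> real) \<Rightarrow> real \<Rightarrow> real \<Rightarrow> (real^'n::finite \<Rightarrow> real) \<Rightarrow> real^'n \<Rightarrow> real" where
  "evol \<alpha> q b c t s f = (SOME u. is_sol \<alpha> q b c s f u) t"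

definition evol_op :: "real \<Rightarrow> (real \<Rightarrow> real^'n \<Rightarrow> real^'n^'n) \<Rightarrow> (real \<Rightarrow> real^'n \<Rightarrow> real^'n)
     \<Rightarrow> (real \<Rightarrow> real^'n \<Rightarrow> real) \<Rightarrow> real \<Rightarrow> real
     \<Rightarrow> ((real^'n::finite) \<Rightarrow>\<^sub>C real) \<Rightarrow> ((real^'n) \<Rightarrow>\<^sub>C real)" where
  "evol_op \<alpha> q b c t s f = Bcontfun (evol \<alpha> q b c t s (apply_bcontfun f))"

definition compact_op :: "('a::real_normed_vector \<Rightarrow> 'b::metric_space) \<Rightarrow> bool" where
  "compact_op T \<longleftrightarrow> compact (closure (T ` cball 0 1))"

definition green_fn :: "real set \<Rightarrow> real \<Rightarrow> (real \<Rightarrow> real^'n \<Rightarrow> real^'n^'n) \<Rightarrow> (real \<Rightarrow> real^'n \<Rightarrow> real^'n)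
     \<Rightarrow> (real \<Rightarrow> real^'n \<Rightarrow> real) \<Rightarrow> (real \<Rightarrow> real \<Rightarrow> real^'n \<Rightarrow> real^'n::finite \<Rightarrow> real) \<Rightarrow> bool" where
  "green_fn I \<alpha> q b c g \<longleftrightarrow>
     (\<forall>t s x. s \<in> I \<and> s < t \<longrightarrow>
        (\<forall>y. g t s x y > 0) \<and> g t s x \<in> borel_measurable lborel \<and>
        (\<forall>f. bcont f \<longrightarrow> integrable lborel (\<lambda>y. g t s x y * f y) \<and>
             evol \<alpha> q b c t s f x = (\<integral>y. g t s x y * f y \<partial>lborel)))"

definition gmeas :: "(real \<Rightarrow> real \<Rightarrow> real^'n \<Rightarrow> real^'n::finite \<Rightarrow> real) \<Rightarrow> real \<Rightarrow> real \<Rightarrow> real^'n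
     \<Rightarrow> (real^'n) set \<Rightarrow> real" where
  "gmeas g t s x A = (LINT y:A|lborel. g t s x y)"

end

theory Submission
  imports Defs
begin


lemma holder_loc_mono: "S' \<subseteq> S \<Longrightarrow> holder_loc a S f \<Longrightarrow> holder_loc a S' f"
  unfolding holder_loc_def by (meson continuous_on_subset order_trans)

lemma is_sol_restrict:
  assumes "is_sol a q b c s f u" "s \<le> r"
  shows "is_sol a q b c r (u r) u"
proof -
  have hm: "holder_loc a ({s<..} \<times> UNIV) h \<Longrightarrow> holder_loc a ({r<..} \<times> UNIV) h" for h :: "real \<Rightarrow> real^'a \<Rightarrow> real"
    by (rule holder_loc_mono[rotated]) (use assms(2) in auto)
  from assms(1) show ?thesis unfolding is_sol_def
  proof (elim conjE, intro conjI)
    assume "continuous_on ({s..} \<times> UNIV) (\<lambda>(t, x). u t x)"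
    then show "continuous_on ({r..} \<times> UNIV) (\<lambda>(t, x). u t x)"
      by (rule continuous_on_subset) (use assms(2) in auto)
  next
    assume B: "\<forall>T\<ge>s. bounded ((\<lambda>(t, x). u t x) ` ({s..T} \<times> UNIV))"
    show "\<forall>T\<ge>r. bounded ((\<lambda>(t, x). u t x) ` ({r..T} \<times> UNIV))"
    proof (intro allI impI)
      fix T assume "r \<le> T"
      then have "bounded ((\<lambda>(t, x). u t x) ` ({s..T} \<times> UNIV))" using assms(2) B by auto
      moreover have "(\<lambda>(t, x). u t x) ` ({r..T} \<times> UNIV) \<subseteq> (\<lambda>(t, x). u t x) ` ({s..T} \<times> UNIV)"
        using assms(2) by (intro image_mono) auto
      ultimately show "bounded ((\<lambda>(t, x). u t x) ` ({r..T} \<times> UNIV))" using bounded_subset by blast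
    qed
  qed (use assms(2) hm in auto)
qed



locale EV =
  fixes I :: "real set" and \<alpha> :: real
    and q :: "real \<Rightarrow> real^'n::finite \<Rightarrow> real^'n^'n"
    and b :: "real \<Rightarrow> real^'n \<Rightarrow> real^'n"
    and c :: "real \<Rightarrow> real^'n \<Rightarrow> real"
    and g :: "real \<Rightarrow> real \<Rightarrow> real^'n \<Rightarrow> real^'n \<Rightarrow> real"
  assumes wp: "well_posed I \<alpha> q b c"
    and gr: "green_fn I \<alpha> q b c g"
begin

abbreviation "E \<equiv> evol \<alpha> q b c"

lemma sol_ex: "s \<in> I \<Longrightarrow> bcont f \<Longrightarrow> Ex (is_sol \<alpha> q b c s f)"
  using wp unfolding well_posed_def by blast

lemma sol_uniq: "s \<in> I \<Longrightarrow> bcont f \<Longrightarrow> is_sol \<alpha> q b c s f u \<Longrightarrow> is_sol \<alpha> q b c s f v \<Longrightarrow> s \<le> t \<Longrightarrow> u t = v t"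
  using wp unfolding well_posed_def by blast

lemma sol: "s \<in> I \<Longrightarrow> bcont f \<Longrightarrow> is_sol \<alpha> q b c s f (SOME u. is_sol \<alpha> q b c s f u)"
  using sol_ex by (rule someI_ex)

lemma E_eq: "E t s f = (SOME u. is_sol \<alpha> q b c s f u) t"
  by (simp add: evol_def)

lemma E_bcont:
  assumes "s \<in> I" "bcont f" "s \<le> t"
  shows "bcont (E t s f)"
proof -
  define u where "u = (SOME u. is_sol \<alpha> q b c s f u)"
  have S: "is_sol \<alpha> q b c s f u" unfolding u_def by (rule sol[OF assms(1,2)])
  have c1: "continuous_on ({s..} \<times> UNIV) (\<lambda>(t,x). u t x)" using S unfolding is_sol_def by blast
  have cp: "continuous_on UNIV (\<lambda>x::real^'n. (t, x))" by (intro continuous_intros)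
  have "continuous_on UNIV (\<lambda>x. (\<lambda>(t,x). u t x) (t, x))"
    apply (rule continuous_on_compose2[OF c1 cp])
    using assms by auto
  then have C: "continuous_on UNIV (u t)" by simp
  have "bounded ((\<lambda>(t,x). u t x) ` ({s..t} \<times> UNIV))" using S assms unfolding is_sol_def by blast
  moreover have "range (u t) \<subseteq> (\<lambda>(t,x). u t x) ` ({s..t} \<times> UNIV)" using assms by force
  ultimately have "bounded (range (u t))" using bounded_subset by blast
  with C show ?thesis by (simp add: bcont_def E_eq u_def)
qed

lemma E_int:
  assumes "s \<in> I" "bcont f" "s < t"
  shows "integrable lborel (\<lambda>y. g t s x y * f y)" "E t s f x = (\<integral>y. g t s x y * f y \<partial>lborel)"
  using gr assms unfolding green_fn_def by blast+

lemma g_pos: "s \<in> I \<Longrightarrow> s < t \<Longrightarrow> g t s x y > 0"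
  using gr unfolding green_fn_def by blast

lemma g_meas: "s \<in> I \<Longrightarrow> s < t \<Longrightarrow> g t s x \<in> borel_measurable lborel"
  using gr unfolding green_fn_def by blast

lemma E_comp:
  assumes "s \<in> I" "r \<in> I" "bcont f" "s \<le> r" "r \<le> t"
  shows "E t r (E r s f) = E t s f"
proof -
  define u where "u = (SOME u. is_sol \<alpha> q b c s f u)"
  have S: "is_sol \<alpha> q b c s f u" unfolding u_def by (rule sol[OF assms(1,3)])
  have S2: "is_sol \<alpha> q b c r (u r) u" using is_sol_restrict[OF S assms(4)] .
  have B: "bcont (u r)" using E_bcont[OF assms(1,3,4)] by (simp add: E_eq u_def)
  have S3: "is_sol \<alpha> q b c r (u r) (SOME v. is_sol \<alpha> q b c r (u r) v)" using sol[OF assms(2) B] .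
  have "(SOME v. is_sol \<alpha> q b c r (u r) v) t = u t"
    using sol_uniq[OF assms(2) B S3 S2] assms(5) .
  then show ?thesis by (simp add: E_eq u_def)
qed

lemma E_holder:
  assumes "s \<in> I" "bcont f" "s < r" "compact K"
  shows "\<exists>C. \<forall>x\<in>K. \<forall>y\<in>K. \<bar>E r s f x - E r s f y\<bar> \<le> C * norm (x - y) powr \<alpha>"
proof -
  define u where "u = (SOME u. is_sol \<alpha> q b c s f u)"
  have S: "is_sol \<alpha> q b c s f u" unfolding u_def by (rule sol[OF assms(1,2)])
  have H: "holder_loc \<alpha> ({s<..} \<times> UNIV) u" using S unfolding is_sol_def by blast
  have H': "\<forall>K. compact K \<and> K \<subseteq> {s<..} \<times> UNIV \<longrightarrow>
        (\<exists>C. \<forall>t x s y. (t,x) \<in> K \<and> (s,y) \<in> K \<longrightarrow>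
             \<bar>u t x - u s y\<bar> \<le> C * (\<bar>t - s\<bar> powr (\<alpha>/2) + norm (x - y) powr \<alpha>))"
    using H unfolding holder_loc_def by (rule conjunct2)
  have cK: "compact ({r} \<times> K)" using assms(4) by (simp add: compact_Times)
  moreover have sK: "{r} \<times> K \<subseteq> {s<..} \<times> UNIV" using assms by auto
  obtain C where C: "\<forall>t x s y. (t,x) \<in> {r} \<times> K \<and> (s,y) \<in> {r} \<times> K \<longrightarrow>
      \<bar>u t x - u s y\<bar> \<le> C * (\<bar>t - s\<bar> powr (\<alpha>/2) + norm (x - y) powr \<alpha>)"
    using H'[rule_format, OF conjI[OF cK sK]] by (elim exE)
  have "\<forall>x\<in>K. \<forall>y\<in>K. \<bar>u r x - u r y\<bar> \<le> C * norm (x - y) powr \<alpha>"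
  proof (intro ballI)
    fix x y assume "x \<in> K" "y \<in> K"
    then have "\<bar>u r x - u r y\<bar> \<le> C * (\<bar>r - r\<bar> powr (\<alpha>/2) + norm (x - y) powr \<alpha>)"
      using C by blast
    then show "\<bar>u r x - u r y\<bar> \<le> C * norm (x - y) powr \<alpha>" by simp
  qed
  then show ?thesis unfolding E_eq u_def[symmetric] by blast
qed

end


lemma bcont_iff: "bcont f \<longleftrightarrow> f \<in> bcontfun"
  by (simp add: bcont_def bcontfun_def)

lemma bcont_apply: "bcont (apply_bcontfun f)"
  by (simp add: bcont_iff apply_bcontfun)

lemma bcont_lin: "bcont f \<Longrightarrow> bcont h \<Longrightarrow> bcont (\<lambda>y. a * f y + h y)"
  unfolding bcont_iff
proof -
  assume f: "f \<in> bcontfun" and h: "h \<in> bcontfun"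
  have "(\<lambda>y. a *\<^sub>R f y) \<in> bcontfun" using f by (rule scaleR_cont)
  then have "(\<lambda>y. a *\<^sub>R f y + h y) \<in> bcontfun" using h by (rule plus_cont)
  then show "(\<lambda>y. a * f y + h y) \<in> bcontfun" by simp
qed

lemma bcont_const: "bcont (\<lambda>y. a)"
  unfolding bcont_iff by (rule const_bcontfun)

context EV begin

lemma E_lin:
  assumes "s \<in> I" "s < t" "bcont f" "bcont h"
  shows "E t s (\<lambda>y. a * f y + h y) x = a * E t s f x + E t s h x"
proof -
  have i1: "integrable lborel (\<lambda>y. g t s x y * f y)" using E_int(1)[OF assms(1,3,2)] .
  have i2: "integrable lborel (\<lambda>y. g t s x y * h y)" using E_int(1)[OF assms(1,4,2)] .
  have "E t s (\<lambda>y. a * f y + h y) x = (\<integral>y. g t s x y * (a * f y + h y) \<partial>lborel)"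
    using E_int(2)[OF assms(1) bcont_lin[OF assms(3,4)] assms(2)] .
  also have "\<dots> = (\<integral>y. a * (g t s x y * f y) + g t s x y * h y \<partial>lborel)"
    by (simp add: algebra_simps)
  also have "\<dots> = (\<integral>y. a * (g t s x y * f y) \<partial>lborel) + (\<integral>y. g t s x y * h y \<partial>lborel)"
    by (rule Bochner_Integration.integral_add[OF integrable_mult_right[OF i1] i2])
  also have "\<dots> = a * (\<integral>y. g t s x y * f y \<partial>lborel) + (\<integral>y. g t s x y * h y \<partial>lborel)"
    by (simp only: integral_mult_right_zero)
  also have "\<dots> = a * E t s f x + E t s h x"
    using E_int(2)[OF assms(1,3,2)] E_int(2)[OF assms(1,4,2)] by simp
  finally show ?thesis .
qed

lemma E_bound:
  assumes "s \<in> I" "s < t" "bcont f" "\<And>y. \<bar>f y\<bar> \<le> B"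
  shows "\<bar>E t s f x\<bar> \<le> B * E t s (\<lambda>_. 1) x"
proof -
  have i1: "integrable lborel (\<lambda>y. g t s x y * f y)" using E_int(1)[OF assms(1,3,2)] .
  have i2: "integrable lborel (\<lambda>y. g t s x y * 1)" using E_int(1)[OF assms(1) bcont_const assms(2)] .
  then have i3: "integrable lborel (\<lambda>y. B * (g t s x y * 1))" by simp
  have "\<bar>E t s f x\<bar> = \<bar>\<integral>y. g t s x y * f y \<partial>lborel\<bar>" using E_int(2)[OF assms(1,3,2)] by simp
  also have "\<dots> \<le> (\<integral>y. B * (g t s x y * 1) \<partial>lborel)"
  proof (rule integral_abs_bound_integral[OF i1 i3])
    fix y
    have gp: "g t s x y > 0" using g_pos[OF assms(1,2)] .
    have "\<bar>g t s x y * f y\<bar> = g t s x y * \<bar>f y\<bar>" by (simp add: abs_mult abs_of_pos[OF gp])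
    also have "\<dots> \<le> g t s x y * B" using g_pos[OF assms(1,2)] assms(4) by (simp add: mult_left_mono)
    finally show "\<bar>g t s x y * f y\<bar> \<le> B * (g t s x y * 1)" by (simp add: mult.commute)
  qed
  also have "\<dots> = B * E t s (\<lambda>_. 1) x" using E_int(2)[OF assms(1) bcont_const assms(2)] by simp
  finally show ?thesis .
qed

lemma E1_nonneg:
  assumes "s \<in> I" "s < t"
  shows "E t s (\<lambda>_. 1) x \<ge> 0"
proof -
  have "E t s (\<lambda>_. 1) x = (\<integral>y. g t s x y * 1 \<partial>lborel)" using E_int(2)[OF assms(1) bcont_const assms(2)] .
  also have "\<dots> \<ge> 0" using g_pos[OF assms] by (intro integral_nonneg_AE) (auto simp: less_imp_le)
  finally show ?thesis .
qed

lemma E1_bounded: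
  assumes "s \<in> I" "s < t"
  obtains M where "M \<ge> 0" "\<And>x. E t s (\<lambda>_. 1) x \<le> M" "\<And>x. E t s (\<lambda>_. 1) x \<ge> 0"
proof -
  have "bcont (E t s (\<lambda>_. 1))" using E_bcont[OF assms(1) bcont_const] assms by simp
  then have "bounded (range (E t s (\<lambda>_. 1)))" by (simp add: bcont_def)
  then obtain M where M0: "\<forall>y\<in>range (E t s (\<lambda>_. 1)). norm y \<le> M" unfolding bounded_iff by blast
  have M: "norm (E t s (\<lambda>_. 1) x) \<le> M" for x using M0 by simp
  show ?thesis
  proof
    show "0 \<le> \<bar>M\<bar>" by simp
    fix x show "E t s (\<lambda>_. 1) x \<le> \<bar>M\<bar>" using M[of x] by simp
    show "E t s (\<lambda>_. 1) x \<ge> 0" using E1_nonneg[OF assms] .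
  qed
qed

lemma E_tail:
  assumes "s \<in> I" "s < t" "bcont h" "bcont h'" "\<And>y. \<bar>h y\<bar> \<le> B" "\<And>y. \<bar>h' y\<bar> \<le> B"
    and "\<And>y. y \<in> ball 0 R \<Longrightarrow> \<bar>h y - h' y\<bar> \<le> d" and "d \<ge> 0"
  shows "\<bar>E t s h x - E t s h' x\<bar> \<le> d * E t s (\<lambda>_. 1) x + 2 * B * gmeas g t s x (UNIV - ball 0 R)"
proof -
  let ?A = "UNIV - ball (0::real^'n) R"
  have i1: "integrable lborel (\<lambda>y. g t s x y * h y)" using E_int(1)[OF assms(1,3,2)] .
  have i2: "integrable lborel (\<lambda>y. g t s x y * h' y)" using E_int(1)[OF assms(1,4,2)] .
  have i0: "integrable lborel (\<lambda>y. g t s x y * 1)" using E_int(1)[OF assms(1) bcont_const assms(2)] .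
  then have i0': "integrable lborel (\<lambda>y. g t s x y)" by simp
  have iA: "integrable lborel (\<lambda>y. indicator ?A y *\<^sub>R g t s x y)"
    by (rule integrable_mult_indicator[OF _ i0']) auto
  have iB: "integrable lborel (\<lambda>y. d * (g t s x y * 1) + 2 * B * (indicator ?A y *\<^sub>R g t s x y))"
    by (rule Bochner_Integration.integrable_add[OF integrable_mult_right[OF i0] integrable_mult_right[OF iA]])
  have gm: "gmeas g t s x ?A = (\<integral>y. indicator ?A y *\<^sub>R g t s x y \<partial>lborel)"
    by (simp add: gmeas_def set_lebesgue_integral_def)
  have "E t s h x - E t s h' x = (\<integral>y. g t s x y * h y \<partial>lborel) - (\<integral>y. g t s x y * h' y \<partial>lborel)"
    using E_int(2)[OF assms(1,3,2)] E_int(2)[OF assms(1,4,2)] by simp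
  also have "\<dots> = (\<integral>y. g t s x y * h y - g t s x y * h' y \<partial>lborel)"
    by (rule Bochner_Integration.integral_diff[symmetric, OF i1 i2])
  finally have "E t s h x - E t s h' x = (\<integral>y. g t s x y * h y - g t s x y * h' y \<partial>lborel)" .
  then have "\<bar>E t s h x - E t s h' x\<bar> = \<bar>\<integral>y. g t s x y * h y - g t s x y * h' y \<partial>lborel\<bar>" by simp
  also have "\<dots> \<le> (\<integral>y. d * (g t s x y * 1) + 2 * B * (indicator ?A y *\<^sub>R g t s x y) \<partial>lborel)"
  proof (rule integral_abs_bound_integral[OF _ iB])
    show "integrable lborel (\<lambda>y. g t s x y * h y - g t s x y * h' y)" by (rule Bochner_Integration.integrable_diff[OF i1 i2])
    fix y
    have gp: "g t s x y > 0" using g_pos[OF assms(1,2)] .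
    have "\<bar>h y - h' y\<bar> \<le> d + 2 * B * indicator ?A y"
    proof (cases "y \<in> ball 0 R")
      case True
      then show ?thesis using assms(7)[OF True] by simp
    next
      case False
      have "\<bar>h y - h' y\<bar> \<le> \<bar>h y\<bar> + \<bar>h' y\<bar>" by (rule abs_triangle_ineq4)
      moreover have "indicator ?A y = (1::real)" using False by (simp add: indicator_def)
      ultimately show ?thesis using assms(5,6)[of y] assms(8) by simp
    qed
    then have "g t s x y * \<bar>h y - h' y\<bar> \<le> g t s x y * (d + 2 * B * indicator ?A y)"
      using gp by (simp add: mult_left_mono)
    moreover have "\<bar>g t s x y * h y - g t s x y * h' y\<bar> = g t s x y * \<bar>h y - h' y\<bar>"
      by (simp only: right_diff_distrib[symmetric] abs_mult abs_of_pos[OF gp])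
    moreover have "g t s x y * (d + 2 * B * indicator ?A y) = d * (g t s x y * 1) + 2 * B * (indicator ?A y *\<^sub>R g t s x y)"
      by (simp add: algebra_simps)
    ultimately show "\<bar>g t s x y * h y - g t s x y * h' y\<bar> \<le> d * (g t s x y * 1) + 2 * B * (indicator ?A y *\<^sub>R g t s x y)"
      by simp
  qed
  also have "\<dots> = (\<integral>y. d * (g t s x y * 1) \<partial>lborel) + (\<integral>y. 2 * B * (indicator ?A y *\<^sub>R g t s x y) \<partial>lborel)"
    by (rule Bochner_Integration.integral_add[OF integrable_mult_right[OF i0] integrable_mult_right[OF iA]])
  also have "\<dots> = d * (\<integral>y. g t s x y * 1 \<partial>lborel) + 2 * B * (\<integral>y. indicator ?A y *\<^sub>R g t s x y \<partial>lborel)"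
    by (simp only: integral_mult_right_zero)
  also have "\<dots> = d * E t s (\<lambda>_. 1) x + 2 * B * gmeas g t s x ?A"
    using E_int(2)[OF assms(1) bcont_const assms(2)] gm by simp
  finally show ?thesis .
qed

end


lemma baire_cover:
  fixes F :: "nat \<Rightarrow> 'a::complete_space set"
  assumes "\<And>n. closed (F n)" "(\<Union>n. F n) = UNIV"
  shows "\<exists>n x e. e > 0 \<and> ball x e \<subseteq> F n"
proof (rule ccontr)
  assume H: "\<not> ?thesis"
  have "Met_TC.mtopology interior_of \<Union>(range F) = {}"
  proof (rule Met_TC.metric_Baire_category_alt)
    show "Met_TC.mcomplete TYPE('a)" using complete_UNIV by simp
    show "countable (range F)" by simp
    fix T assume "T \<in> range F"
    then obtain n where T: "T = F n" by auto
    show "closedin Met_TC.mtopology T \<and> Met_TC.mtopology interior_of T = {}"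
    proof
      show "closedin Met_TC.mtopology T" using assms(1) T by simp
      show "Met_TC.mtopology interior_of T = {}"
      proof (rule ccontr)
        assume "Met_TC.mtopology interior_of T \<noteq> {}"
        then obtain x where "x \<in> interior T" by (auto simp: interior_of_def interior_def)
        then obtain e where "e>0" "ball x e \<subseteq> T" using open_contains_ball by (metis interior_subset open_interior subset_trans)
        then show False using H T by blast
      qed
    qed
  qed
  then show False using assms(2) by simp
qed

context EV begin

lemma E_diff:
  assumes "s \<in> I" "s < t" "bcont f" "bcont h"
  shows "E t s (\<lambda>y. f y - h y) x = E t s f x - E t s h x"
proof -
  have "(\<lambda>y. f y - h y) = (\<lambda>y. (-1) * h y + f y)" by auto
  then show ?thesis using E_lin[OF assms(1,2,4,3), of "-1" x] by simp
qed

lemma Top_apply: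
  assumes "s \<in> I" "s \<le> t"
  shows "apply_bcontfun (evol_op \<alpha> q b c t s f) = E t s (apply_bcontfun f)"
proof -
  have "bcont (E t s (apply_bcontfun f))" using E_bcont[OF assms(1) bcont_apply assms(2)] .
  then have "E t s (apply_bcontfun f) \<in> bcontfun" by (simp add: bcont_iff)
  then show ?thesis unfolding evol_op_def by (rule Bcontfun_inverse)
qed

lemma E_norm_bound:
  assumes "s \<in> I" "s < t"
  shows "\<bar>E t s (apply_bcontfun f) x\<bar> \<le> norm f * E t s (\<lambda>_. 1) x"
proof (rule E_bound[OF assms bcont_apply])
  fix y show "\<bar>apply_bcontfun f y\<bar> \<le> norm f" using norm_bounded[of f y] by simp
qed

lemma equicont:
  assumes "s \<in> I" "s < r" "compact K"
  shows "\<exists>L. \<forall>f. norm f \<le> 1 \<longrightarrow> (\<forall>x\<in>K. \<forall>y\<in>K.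
            \<bar>E r s (apply_bcontfun f) x - E r s (apply_bcontfun f) y\<bar> \<le> L * norm (x - y) powr \<alpha>)"
proof -
  obtain M where M: "M \<ge> 0" "\<And>x. E r s (\<lambda>_. 1) x \<le> M" "\<And>x. E r s (\<lambda>_. 1) x \<ge> 0"
    using E1_bounded[OF assms(1,2)] by metis
  define \<phi> where "\<phi> x y f = E r s (apply_bcontfun f) x - E r s (apply_bcontfun f) y"
    for x y and f :: "(real^'n) \<Rightarrow>\<^sub>C real"
  have Ediff: "E r s (apply_bcontfun f) z - E r s (apply_bcontfun f') z = E r s (apply_bcontfun (f - f')) z"
    for f f' :: "(real^'n) \<Rightarrow>\<^sub>C real" and z
  proof -
    have "apply_bcontfun (f - f') = (\<lambda>y. apply_bcontfun f y - apply_bcontfun f' y)" by auto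
    then show ?thesis using E_diff[OF assms(1,2) bcont_apply bcont_apply, of f f' z] by simp
  qed
  have lip: "dist (\<phi> x y f) (\<phi> x y f') \<le> (2*M) * dist f f'" for x y f f'
  proof -
    have "\<phi> x y f - \<phi> x y f' = E r s (apply_bcontfun (f - f')) x - E r s (apply_bcontfun (f - f')) y"
      unfolding \<phi>_def using Ediff[where f=f and f'=f' and z=x] Ediff[where f=f and f'=f' and z=y] by simp
    moreover have zb: "\<bar>E r s (apply_bcontfun (f - f')) z\<bar> \<le> M * dist f f'" for z
    proof -
      have "\<bar>E r s (apply_bcontfun (f - f')) z\<bar> \<le> norm (f - f') * E r s (\<lambda>_. 1) z"
        by (rule E_norm_bound[OF assms(1,2)])
      also have "\<dots> \<le> norm (f - f') * M" using M(2)[of z] by (simp add: mult_left_mono)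
      finally show ?thesis by (simp add: dist_norm mult.commute)
    qed
    ultimately show ?thesis unfolding dist_real_def
      using abs_triangle_ineq4[of "E r s (apply_bcontfun (f - f')) x" "E r s (apply_bcontfun (f - f')) y"]
        zb[of x] zb[of y] by linarith
  qed
  have contphi: "continuous_on UNIV (\<lambda>f. \<bar>\<phi> x y f\<bar>)" for x y
  proof -
    have "(2*M)-lipschitz_on UNIV (\<phi> x y)" by (rule lipschitz_onI) (use lip M(1) in auto)
    then have "continuous_on UNIV (\<phi> x y)" by (rule lipschitz_on_continuous_on)
    then show ?thesis by (intro continuous_intros)
  qed
  define F where "F n = (\<Inter>x\<in>K. \<Inter>y\<in>K. {f. \<bar>\<phi> x y f\<bar> \<le> real n * norm (x - y) powr \<alpha>})" for n :: nat
  have Fmem: "f \<in> F n \<longleftrightarrow> (\<forall>x\<in>K. \<forall>y\<in>K. \<bar>\<phi> x y f\<bar> \<le> real n * norm (x - y) powr \<alpha>)" for f n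
    unfolding F_def by simp
  have clF: "closed (F n)" for n
    unfolding F_def
    by (intro closed_INT ballI closed_Collect_le contphi continuous_on_const)
  have covF: "(\<Union>n. F n) = UNIV"
  proof -
    have "f \<in> (\<Union>n. F n)" for f
    proof -
      from E_holder[OF assms(1) bcont_apply assms(2,3), of f]
      obtain C where C: "\<forall>x\<in>K. \<forall>y\<in>K. \<bar>E r s (apply_bcontfun f) x - E r s (apply_bcontfun f) y\<bar> \<le> C * norm (x - y) powr \<alpha>"
        ..
      have "f \<in> F (nat \<lceil>C\<rceil>)"
        unfolding Fmem
      proof (intro ballI)
        fix x y assume xy: "x \<in> K" "y \<in> K"
        have "C * norm (x - y) powr \<alpha> \<le> real (nat \<lceil>C\<rceil>) * norm (x - y) powr \<alpha>"
          by (intro mult_right_mono) (auto simp: real_nat_ceiling_ge)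
        moreover have "\<bar>\<phi> x y f\<bar> \<le> C * norm (x - y) powr \<alpha>"
          using bspec[OF bspec[OF C xy(1)] xy(2)] unfolding \<phi>_def .
        ultimately show "\<bar>\<phi> x y f\<bar> \<le> real (nat \<lceil>C\<rceil>) * norm (x - y) powr \<alpha>"
          by linarith
      qed
      then show ?thesis by (rule UN_I[OF UNIV_I])
    qed
    then show ?thesis by (intro set_eqI iffI) simp_all
  qed
  from baire_cover[OF clF covF] obtain n f0 e where e: "e > 0" "ball f0 e \<subseteq> F n" by metis
  have "f0 \<in> ball f0 e" using e(1) by simp
  with e(2) have f0F: "f0 \<in> F n" by (rule subsetD)
  define L where "L = 4 * real n / e"
  show ?thesis
  proof (intro exI[of _ L] allI impI ballI)
    fix f :: "(real^'n) \<Rightarrow>\<^sub>C real" and x y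
    assume nf: "norm f \<le> 1" and xy: "x \<in> K" "y \<in> K"
    define f1 where "f1 = f0 + (e/2) *\<^sub>R f"
    have d1: "f0 - f1 = - ((e/2) *\<^sub>R f)" unfolding f1_def by (simp add: algebra_simps)
    have "dist f0 f1 = norm ((e/2) *\<^sub>R f)" unfolding dist_norm d1 by (rule norm_minus_cancel)
    also have "\<dots> = (e/2) * norm f" using e(1) by (simp only: norm_scaleR abs_of_pos half_gt_zero)
    also have "\<dots> \<le> (e/2) * 1" by (rule mult_left_mono[OF nf]) (use e(1) in linarith)
    also have "\<dots> < e" using e(1) by linarith
    finally have "f1 \<in> ball f0 e" by simp
    with e(2) have "f1 \<in> F n" by (rule subsetD)
    then have h1: "\<bar>\<phi> x y f1\<bar> \<le> real n * norm (x - y) powr \<alpha>" using xy unfolding Fmem by simp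
    have h0: "\<bar>\<phi> x y f0\<bar> \<le> real n * norm (x - y) powr \<alpha>" using f0F xy unfolding Fmem by simp
    have "apply_bcontfun f1 = (\<lambda>z. (e/2) * apply_bcontfun f z + apply_bcontfun f0 z)"
      unfolding f1_def by auto
    then have "\<phi> x y f1 = (e/2) * \<phi> x y f + \<phi> x y f0"
      unfolding \<phi>_def
      using E_lin[OF assms(1,2) bcont_apply[of f] bcont_apply[of f0], where a="e/2" and x=x]
            E_lin[OF assms(1,2) bcont_apply[of f] bcont_apply[of f0], where a="e/2" and x=y]
      by (simp add: algebra_simps)
    then have "(e/2) * \<bar>\<phi> x y f\<bar> = \<bar>\<phi> x y f1 - \<phi> x y f0\<bar>"
      using e(1) by (simp add: abs_mult)
    also have "\<dots> \<le> \<bar>\<phi> x y f1\<bar> + \<bar>\<phi> x y f0\<bar>" by (rule abs_triangle_ineq4)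
    also have "\<dots> \<le> 2 * (real n * norm (x - y) powr \<alpha>)" using h0 h1 by linarith
    finally have "(e/2) * \<bar>\<phi> x y f\<bar> \<le> 2 * (real n * norm (x - y) powr \<alpha>)" .
    then have "\<bar>\<phi> x y f\<bar> \<le> (4 * real n / e) * norm (x - y) powr \<alpha>"
      using e(1) by (simp add: field_simps)
    then show "\<bar>E r s (apply_bcontfun f) x - E r s (apply_bcontfun f) y\<bar> \<le> L * norm (x - y) powr \<alpha>"
      unfolding L_def \<phi>_def .
  qed
qed

end


lemma floor_close:
  fixes a c :: real
  assumes "\<lfloor>a\<rfloor> = \<lfloor>c\<rfloor>"
  shows "\<bar>a - c\<bar> < 1"
proof -
  have "of_int \<lfloor>a\<rfloor> \<le> a \<and> a < of_int (\<lfloor>a\<rfloor> + 1)" by (rule floor_correct)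
  moreover have "of_int \<lfloor>c\<rfloor> \<le> c \<and> c < of_int (\<lfloor>c\<rfloor> + 1)" by (rule floor_correct)
  ultimately show ?thesis using assms by simp linarith
qed

lemma floor_close_scaled:
  fixes a c \<eta> :: real
  assumes "\<lfloor>a / \<eta>\<rfloor> = \<lfloor>c / \<eta>\<rfloor>" "\<eta> > 0"
  shows "\<bar>a - c\<bar> < \<eta>"
proof -
  have "\<bar>a / \<eta> - c / \<eta>\<bar> < 1" using floor_close[OF assms(1)] .
  moreover have "a / \<eta> - c / \<eta> = (a - c) / \<eta>" by (simp add: diff_divide_distrib)
  ultimately have "\<bar>a - c\<bar> / \<eta> < 1" using assms(2) by simp
  then show ?thesis using assms(2) by (simp add: divide_less_eq)
qed

lemma floor_range:
  fixes a B \<eta> :: real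
  assumes "\<bar>a\<bar> \<le> B" "\<eta> > 0"
  shows "\<lfloor>a / \<eta>\<rfloor> \<in> {- (\<lceil>B / \<eta>\<rceil> + 1) .. \<lceil>B / \<eta>\<rceil> + 1}"
proof -
  have "\<bar>a / \<eta>\<bar> \<le> B / \<eta>" using assms by (simp add: divide_right_mono)
  then have h: "- (B / \<eta>) \<le> a / \<eta>" "a / \<eta> \<le> B / \<eta>" by linarith+
  have "of_int \<lfloor>a / \<eta>\<rfloor> \<le> a / \<eta> \<and> a / \<eta> < of_int (\<lfloor>a / \<eta>\<rfloor> + 1)" by (rule floor_correct)
  moreover have "B / \<eta> \<le> of_int \<lceil>B / \<eta>\<rceil>" by (rule le_of_int_ceiling)
  ultimately have "real_of_int \<lfloor>a / \<eta>\<rfloor> \<le> of_int (\<lceil>B / \<eta>\<rceil> + 1)"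
     "- real_of_int (\<lceil>B / \<eta>\<rceil> + 1) \<le> of_int \<lfloor>a / \<eta>\<rfloor>" using h by simp_all linarith+
  then show ?thesis by simp
qed

lemma small_powr:
  fixes L \<eta> \<alpha> :: real
  assumes "\<alpha> > 0" "\<eta> > 0"
  shows "\<exists>\<delta>>0. \<forall>u. 0 \<le> u \<and> u < \<delta> \<longrightarrow> L * u powr \<alpha> \<le> \<eta>"
proof -
  define z where "z = \<eta> / (\<bar>L\<bar> + 1)"
  have z: "z > 0" unfolding z_def using assms by simp
  define \<delta> where "\<delta> = z powr (1/\<alpha>)"
  have "\<delta> > 0" unfolding \<delta>_def using z by simp
  moreover have "L * u powr \<alpha> \<le> \<eta>" if u: "0 \<le> u" "u < \<delta>" for u
  proof -
    have "u powr \<alpha> \<le> \<delta> powr \<alpha>" using u assms(1) by (intro powr_mono2) auto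
    also have "\<delta> powr \<alpha> = z" unfolding \<delta>_def powr_powr using assms(1) z by (simp add: powr_one)
    finally have uz: "u powr \<alpha> \<le> z" .
    have "L * u powr \<alpha> \<le> \<bar>L\<bar> * u powr \<alpha>" by (simp add: mult_right_mono)
    also have "\<dots> \<le> \<bar>L\<bar> * z" using uz by (simp add: mult_left_mono)
    also have "\<dots> \<le> \<eta>" unfolding z_def using assms(2)
      by (simp add: field_simps)
    finally show ?thesis .
  qed
  ultimately show ?thesis by blast
qed

lemma finite_classes:
  fixes h :: "'b \<Rightarrow> 'a::metric_space \<Rightarrow> real"
  assumes K: "compact K" and eta: "\<eta> > 0" and al: "\<alpha> > 0"
    and bd: "\<And>b y. b \<in> H \<Longrightarrow> \<bar>h b y\<bar> \<le> B"
    and hol: "\<And>b x y. b \<in> H \<Longrightarrow> x \<in> K \<Longrightarrow> y \<in> K \<Longrightarrow> \<bar>h b x - h b y\<bar> \<le> L * dist x y powr \<alpha>"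
  shows "\<exists>(\<Phi>::'b \<Rightarrow> 'a \<Rightarrow> int) V. finite V \<and> (\<forall>b\<in>H. \<Phi> b \<in> V) \<and>
           (\<forall>b\<in>H. \<forall>b'\<in>H. \<Phi> b = \<Phi> b' \<longrightarrow> (\<forall>y\<in>K. \<bar>h b y - h b' y\<bar> \<le> 3 * \<eta>))"
proof -
  obtain \<delta> where d: "\<delta> > 0" "\<And>u. 0 \<le> u \<Longrightarrow> u < \<delta> \<Longrightarrow> L * u powr \<alpha> \<le> \<eta>"
    using small_powr[OF al eta, of L] by auto
  have close: "\<bar>h b x - h b y\<bar> \<le> \<eta>" if "b \<in> H" "x \<in> K" "y \<in> K" "dist x y < \<delta>" for b x y
    using hol[OF that(1-3)] d(2)[of "dist x y"] that(4) by simp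
  obtain P where P: "finite P" "P \<subseteq> K" "K \<subseteq> (\<Union>p\<in>P. ball p \<delta>)"
    using seq_compact_imp_totally_bounded[OF compact_imp_seq_compact[OF K]] d(1) by meson
  define N where "N = \<lceil>B / \<eta>\<rceil> + 1"
  define \<Phi> where "\<Phi> b = restrict (\<lambda>p. \<lfloor>h b p / \<eta>\<rfloor>) P" for b
  define V where "V = PiE P (\<lambda>_. {-N..N})"
  have f1: "finite V" unfolding V_def using P(1) by (intro finite_PiE) auto
  have f2: "\<forall>b\<in>H. \<Phi> b \<in> V"
  proof
    fix b assume b: "b \<in> H"
    show "\<Phi> b \<in> V" unfolding \<Phi>_def V_def restrict_PiE_iff N_def
      using floor_range[OF bd[OF b] eta] by (intro ballI)
  qed
  have f3: "\<forall>b\<in>H. \<forall>b'\<in>H. \<Phi> b = \<Phi> b' \<longrightarrow> (\<forall>y\<in>K. \<bar>h b y - h b' y\<bar> \<le> 3 * \<eta>)"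
  proof (intro ballI impI)
    fix b b' y assume b: "b \<in> H" and b': "b' \<in> H" and eq: "\<Phi> b = \<Phi> b'" and y: "y \<in> K"
    obtain p where p: "p \<in> P" "y \<in> ball p \<delta>" using P(3) y by blast
    have pK: "p \<in> K" using P(2) p(1) by blast
    have "\<lfloor>h b p / \<eta>\<rfloor> = \<lfloor>h b' p / \<eta>\<rfloor>"
      using fun_cong[OF eq, of p] p(1) unfolding \<Phi>_def by simp
    then have m: "\<bar>h b p - h b' p\<bar> < \<eta>" using floor_close_scaled eta by blast
    have dd: "dist y p < \<delta>" using p(2) by (simp add: dist_commute)
    have c1: "\<bar>h b y - h b p\<bar> \<le> \<eta>" using close[OF b y pK dd] .
    have c2: "\<bar>h b' y - h b' p\<bar> \<le> \<eta>" using close[OF b' y pK dd] .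
    show "\<bar>h b y - h b' y\<bar> \<le> 3 * \<eta>" using m c1 c2 by linarith
  qed
  show ?thesis by (rule exI[of _ \<Phi>], rule exI[of _ V], intro conjI f1 f2 f3)
qed



lemma tb_from_classes:
  fixes T :: "'b \<Rightarrow> 'c::metric_space" and \<Phi> :: "'b \<Rightarrow> 'd"
  assumes fin: "finite V" and inV: "\<forall>b\<in>H. \<Phi> b \<in> V"
    and cl: "\<forall>b\<in>H. \<forall>b'\<in>H. \<Phi> b = \<Phi> b' \<longrightarrow> dist (T b) (T b') < e"
  shows "\<exists>k. finite k \<and> T ` H \<subseteq> (\<Union>x\<in>k. ball x e)"
proof -
  define sel where "sel v = (SOME b. b \<in> H \<and> \<Phi> b = v)" for v
  define k where "k = (\<lambda>v. T (sel v)) ` (\<Phi> ` H)"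
  have "\<Phi> ` H \<subseteq> V" using inV by auto
  then have "finite (\<Phi> ` H)" using fin finite_subset by auto
  then have fk: "finite k" unfolding k_def by simp
  have "T b \<in> (\<Union>x\<in>k. ball x e)" if b: "b \<in> H" for b
  proof -
    have "\<exists>b'. b' \<in> H \<and> \<Phi> b' = \<Phi> b" using b by auto
    then have s: "sel (\<Phi> b) \<in> H \<and> \<Phi> (sel (\<Phi> b)) = \<Phi> b" unfolding sel_def by (rule someI_ex)
    then have "dist (T (sel (\<Phi> b))) (T b) < e" using cl b by auto
    moreover have "T (sel (\<Phi> b)) \<in> k" unfolding k_def using b by auto
    ultimately show ?thesis by auto
  qed
  then show ?thesis using fk by blast
qed

lemma compact_closure_tb:
  fixes S :: "'a::complete_space set"
  assumes tb: "\<forall>e>0. \<exists>k. finite k \<and> S \<subseteq> (\<Union>x\<in>k. ball x e)"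
  shows "compact (closure S)"
  unfolding compact_eq_totally_bounded
proof (intro conjI allI impI)
  show "complete (closure S)" by (simp add: complete_eq_closed)
  fix e :: real assume e: "e > 0"
  then obtain k where k: "finite k" "S \<subseteq> (\<Union>x\<in>k. ball x (e/2))" using tb half_gt_zero by blast
  have "closed (\<Union>x\<in>k. cball x (e/2))" using k(1) by (intro closed_UN) auto
  moreover have "S \<subseteq> (\<Union>x\<in>k. cball x (e/2))" using k(2) ball_subset_cball by blast
  ultimately have "closure S \<subseteq> (\<Union>x\<in>k. cball x (e/2))" by (rule closure_minimal[rotated])
  also have "\<dots> \<subseteq> (\<Union>x\<in>k. ball x e)" using e by (intro UN_mono) auto
  finally show "\<exists>k. finite k \<and> closure S \<subseteq> (\<Union>x\<in>k. ball x e)" using k(1) by blast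
qed



context EV begin

lemma h_bound:
  assumes "s \<in> I" "s < r" "norm f \<le> 1" "\<And>x. E r s (\<lambda>_. 1) x \<le> M" "\<And>x. E r s (\<lambda>_. 1) x \<ge> 0"
  shows "\<bar>E r s (apply_bcontfun f) y\<bar> \<le> M"
proof -
  have "\<bar>E r s (apply_bcontfun f) y\<bar> \<le> norm f * E r s (\<lambda>_. 1) y" by (rule E_norm_bound[OF assms(1,2)])
  also have "\<dots> \<le> 1 * M" by (rule mult_mono) (use assms in auto)
  finally show ?thesis by simp
qed

lemma compact_from_tight:
  assumes al: "\<alpha> > 0" and sI: "s \<in> I" and rI: "r \<in> I" and sr: "s < r" and rt: "r < t"
    and tight: "\<forall>\<epsilon>>0. \<exists>R>0. \<forall>x. gmeas g t r x (UNIV - ball 0 R) \<le> \<epsilon>"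
  shows "compact_op (evol_op \<alpha> q b c t s)"
  unfolding compact_op_def
proof (rule compact_closure_tb, intro allI impI)
  fix \<epsilon> :: real assume ep: "\<epsilon> > 0"
  let ?T = "evol_op \<alpha> q b c t s"
  let ?H = "cball (0::(real^'n) \<Rightarrow>\<^sub>C real) 1"
  have rt': "r \<le> t" "s \<le> r" "s < t" using sr rt by auto
  obtain M1 where M1: "M1 \<ge> 0" "\<And>x. E r s (\<lambda>_. 1) x \<le> M1" "\<And>x. E r s (\<lambda>_. 1) x \<ge> 0"
    using E1_bounded[OF sI sr] by metis
  obtain M2 where M2: "M2 \<ge> 0" "\<And>x. E t r (\<lambda>_. 1) x \<le> M2" "\<And>x. E t r (\<lambda>_. 1) x \<ge> 0"
    using E1_bounded[OF rI rt] by metis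
  define \<epsilon>1 where "\<epsilon>1 = \<epsilon> / (8 * (M1 + 1))"
  have e1: "\<epsilon>1 > 0" unfolding \<epsilon>1_def using ep M1(1) by simp
  from tight e1 obtain R where R: "R > 0" "\<And>x. gmeas g t r x (UNIV - ball 0 R) \<le> \<epsilon>1" by metis
  define \<eta> where "\<eta> = \<epsilon> / (12 * (M2 + 1))"
  have eta: "\<eta> > 0" unfolding \<eta>_def using ep M2(1) by simp
  from equicont[OF sI sr compact_cball[of 0 R]] obtain L where
    L: "\<forall>f. norm f \<le> 1 \<longrightarrow> (\<forall>x\<in>cball 0 R. \<forall>y\<in>cball 0 R.
            \<bar>E r s (apply_bcontfun f) x - E r s (apply_bcontfun f) y\<bar> \<le> L * norm (x - y) powr \<alpha>)" ..
  have hb: "\<bar>E r s (apply_bcontfun f) y\<bar> \<le> M1" if "f \<in> ?H" for f y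
    using h_bound[OF sI sr _ M1(2,3)] that by simp
  have hol: "\<bar>E r s (apply_bcontfun f) x - E r s (apply_bcontfun f) y\<bar> \<le> L * dist x y powr \<alpha>"
    if "f \<in> ?H" "x \<in> cball 0 R" "y \<in> cball 0 R" for f x y
    using L that by (simp add: dist_norm)
  obtain \<Phi> :: "((real^'n) \<Rightarrow>\<^sub>C real) \<Rightarrow> (real^'n) \<Rightarrow> int" and V where
    cls: "finite V" "\<forall>f\<in>?H. \<Phi> f \<in> V"
      "\<forall>f\<in>?H. \<forall>f'\<in>?H. \<Phi> f = \<Phi> f' \<longrightarrow> (\<forall>y\<in>cball 0 R.
           \<bar>E r s (apply_bcontfun f) y - E r s (apply_bcontfun f') y\<bar> \<le> 3 * \<eta>)"
    using finite_classes[OF compact_cball[of "0::real^'n" R] eta al, where H="?H" and h="\<lambda>f y. E r s (apply_bcontfun f) y" and B=M1 and L=L]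
      hb hol by metis
  have a1: "3 * \<eta> * M2 \<le> \<epsilon> / 4"
  proof -
    have "\<eta> * (M2 + 1) = \<epsilon> / 12" unfolding \<eta>_def using M2(1) by (simp add: field_simps)
    moreover have "3 * \<eta> * M2 \<le> 3 * \<eta> * (M2 + 1)" using eta by simp
    ultimately show ?thesis by linarith
  qed
  have a2: "2 * M1 * \<epsilon>1 \<le> \<epsilon> / 4"
  proof -
    have "\<epsilon>1 * (M1 + 1) = \<epsilon> / 8" unfolding \<epsilon>1_def using M1(1) by (simp add: field_simps)
    moreover have "2 * M1 * \<epsilon>1 \<le> 2 * \<epsilon>1 * (M1 + 1)" using e1 by simp
    ultimately show ?thesis by linarith
  qed
  have close: "dist (?T f) (?T f') < \<epsilon>" if f: "f \<in> ?H" and f': "f' \<in> ?H" and eq: "\<Phi> f = \<Phi> f'" for f f'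
  proof -
    define h where "h = E r s (apply_bcontfun f)"
    define h' where "h' = E r s (apply_bcontfun f')"
    have bh: "bcont h" unfolding h_def by (rule E_bcont[OF sI bcont_apply rt'(2)])
    have bh': "bcont h'" unfolding h'_def by (rule E_bcont[OF sI bcont_apply rt'(2)])
    have Tf: "apply_bcontfun (?T f) = E t r h" unfolding Top_apply[OF sI less_imp_le[OF rt'(3)]] h_def
      using E_comp[OF sI rI bcont_apply rt'(2,1)] by simp
    have Tf': "apply_bcontfun (?T f') = E t r h'" unfolding Top_apply[OF sI less_imp_le[OF rt'(3)]] h'_def
      using E_comp[OF sI rI bcont_apply rt'(2,1)] by simp
    have diffR: "\<bar>h y - h' y\<bar> \<le> 3 * \<eta>" if "y \<in> ball 0 R" for y
      using cls(3) f f' eq that unfolding h_def h'_def by auto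
    have pt: "dist (apply_bcontfun (?T f) x) (apply_bcontfun (?T f') x) \<le> \<epsilon> / 2" for x
    proof -
      have "\<bar>E t r h x - E t r h' x\<bar> \<le> 3 * \<eta> * E t r (\<lambda>_. 1) x + 2 * M1 * gmeas g t r x (UNIV - ball 0 R)"
        by (rule E_tail[OF rI rt bh bh']) (use hb f f' diffR eta in \<open>auto simp: h_def h'_def\<close>)
      also have "\<dots> \<le> 3 * \<eta> * M2 + 2 * M1 * \<epsilon>1"
        using M2(2)[of x] R(2)[of x] eta M1(1) by (intro add_mono mult_left_mono) auto
      also have "\<dots> \<le> \<epsilon> / 2" using a1 a2 by linarith
      finally show ?thesis unfolding Tf Tf' dist_real_def .
    qed
    have "dist (?T f) (?T f') \<le> \<epsilon> / 2" by (rule dist_bound[OF pt])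
    then show ?thesis using ep by linarith
  qed
  show "\<exists>k. finite k \<and> ?T ` ?H \<subseteq> (\<Union>x\<in>k. ball x \<epsilon>)"
    by (rule tb_from_classes[OF cls(1,2)]) (use close in blast)
qed

end


definition cut :: "nat \<Rightarrow> real^'n::finite \<Rightarrow> real" where
  "cut n y = min 1 (max 0 (norm y - real n))"

lemma cut_bcontfun: "cut n \<in> bcontfun"
proof (rule bcontfun_normI)
  show "continuous_on UNIV (cut n)" unfolding cut_def by (intro continuous_intros)
  fix x show "norm (cut n x) \<le> 1" unfolding cut_def by simp
qed

lemma cut_range: "0 \<le> cut n y" "cut n y \<le> 1"
  unfolding cut_def by auto

context EV begin

lemma tight_from_compact:
  assumes sI: "s \<in> I" and st: "s < t" and C: "compact_op (evol_op \<alpha> q b c t s)"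
  shows "\<forall>\<epsilon>>0. \<exists>R>0. \<forall>x. gmeas g t s x (UNIV - ball 0 R) \<le> \<epsilon>"
proof (intro allI impI)
  fix \<epsilon> :: real assume ep: "\<epsilon> > 0"
  let ?T = "evol_op \<alpha> q b c t s"
  define \<psi> :: "nat \<Rightarrow> (real^'n) \<Rightarrow>\<^sub>C real" where "\<psi> n = Bcontfun (cut n)" for n
  have apsi: "apply_bcontfun (\<psi> n) = cut n" for n
    unfolding \<psi>_def by (rule Bcontfun_inverse[OF cut_bcontfun])
  have npsi: "norm (\<psi> n) \<le> 1" for n
    by (rule norm_bound) (simp add: apsi cut_def)
  have Tapp: "apply_bcontfun (?T f) = E t s (apply_bcontfun f)" for f
    by (rule Top_apply[OF sI less_imp_le[OF st]])
  have pw: "(\<lambda>n. E t s (cut n) x) \<longlonglongrightarrow> 0" for x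
  proof -
    have bc: "bcont (cut n)" for n by (simp add: bcont_iff cut_bcontfun)
    have int: "integrable lborel (\<lambda>y. g t s x y * cut n y)" for n by (rule E_int(1)[OF sI bc st])
    have int1: "integrable lborel (\<lambda>y. g t s x y * 1)" by (rule E_int(1)[OF sI bcont_const st])
    have "(\<lambda>n. \<integral>y. g t s x y * cut n y \<partial>lborel) \<longlonglongrightarrow> (\<integral>y. g t s x y * 0 \<partial>lborel)"
    proof (rule integral_dominated_convergence[where w="\<lambda>y. g t s x y * 1"])
      show "(\<lambda>y. g t s x y * 0) \<in> borel_measurable lborel" by simp
      show "(\<lambda>y. g t s x y * cut n y) \<in> borel_measurable lborel" for n
        by (rule borel_measurable_integrable[OF int])
      show "integrable lborel (\<lambda>y. g t s x y * 1)" by (rule int1)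
      show "AE y in lborel. (\<lambda>n. g t s x y * cut n y) \<longlonglongrightarrow> g t s x y * 0"
      proof (rule AE_I2)
        fix y :: "real^'n"
        obtain N :: nat where N: "norm y \<le> real N" using real_arch_simple by blast
        have "eventually (\<lambda>n. g t s x y * cut n y = g t s x y * 0) sequentially"
          unfolding eventually_sequentially
        proof (intro exI allI impI)
          fix n assume "N \<le> n"
          then have "norm y \<le> real n" using N by linarith
          then show "g t s x y * cut n y = g t s x y * 0" unfolding cut_def by simp
        qed
        then show "(\<lambda>n. g t s x y * cut n y) \<longlonglongrightarrow> g t s x y * 0" by (rule tendsto_eventually)
      qed
      show "AE y in lborel. norm (g t s x y * cut n y) \<le> g t s x y * 1" for n
      proof (rule AE_I2)
        fix y
        have gp: "g t s x y > 0" by (rule g_pos[OF sI st])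
        have "norm (g t s x y * cut n y) = g t s x y * cut n y"
          using gp cut_range[of n y] by (simp add: abs_mult)
        also have "\<dots> \<le> g t s x y * 1" using gp cut_range[of n y] by (intro mult_left_mono) auto
        finally show "norm (g t s x y * cut n y) \<le> g t s x y * 1" .
      qed
    qed
    moreover have "E t s (cut n) x = (\<integral>y. g t s x y * cut n y \<partial>lborel)" for n
      by (rule E_int(2)[OF sI bc st])
    ultimately show ?thesis by simp
  qed
  have "compact (closure (?T ` cball 0 1))" using C by (simp add: compact_op_def)
  then have sc: "seq_compact (closure (?T ` cball 0 1))" by (rule compact_imp_seq_compact)
  have inS: "?T (\<psi> n) \<in> closure (?T ` cball 0 1)" for n
  proof -
    have "\<psi> n \<in> cball 0 1" using npsi[of n] by (simp add: dist_norm)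
    then have "?T (\<psi> n) \<in> ?T ` cball 0 1" by (rule imageI)
    then show ?thesis using closure_subset by (rule subsetD[rotated])
  qed
  obtain l \<sigma> where l: "strict_mono \<sigma>" "((\<lambda>n. ?T (\<psi> n)) \<circ> \<sigma>) \<longlonglongrightarrow> l"
    using sc inS unfolding seq_compact_def by metis
  have l0: "l = 0"
  proof (rule bcontfun_eqI)
    fix x
    have "(\<lambda>k. apply_bcontfun (((\<lambda>n. ?T (\<psi> n)) \<circ> \<sigma>) k) x) \<longlonglongrightarrow> apply_bcontfun l x"
      unfolding tendsto_iff
    proof (intro allI impI)
      fix e :: real assume e: "e > 0"
      have "eventually (\<lambda>k. dist (((\<lambda>n. ?T (\<psi> n)) \<circ> \<sigma>) k) l < e) sequentially"
        using l(2) e unfolding tendsto_iff by blast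
      then show "eventually (\<lambda>k. dist (apply_bcontfun (((\<lambda>n. ?T (\<psi> n)) \<circ> \<sigma>) k) x) (apply_bcontfun l x) < e) sequentially"
        by (rule eventually_mono) (rule le_less_trans[OF dist_bounded])
    qed
    moreover have "(\<lambda>k. apply_bcontfun (((\<lambda>n. ?T (\<psi> n)) \<circ> \<sigma>) k) x) \<longlonglongrightarrow> 0"
    proof -
      have "((\<lambda>n. E t s (cut n) x) \<circ> \<sigma>) \<longlonglongrightarrow> 0" by (rule LIMSEQ_subseq_LIMSEQ[OF pw l(1)])
      moreover have "(\<lambda>k. apply_bcontfun (((\<lambda>n. ?T (\<psi> n)) \<circ> \<sigma>) k) x) = ((\<lambda>n. E t s (cut n) x) \<circ> \<sigma>)"
        by (simp add: Tapp apsi o_def)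
      ultimately show ?thesis by simp
    qed
    ultimately have "apply_bcontfun l x = 0" by (rule LIMSEQ_unique)
    then show "apply_bcontfun l x = apply_bcontfun 0 x" by simp
  qed
  have "eventually (\<lambda>k. dist (((\<lambda>n. ?T (\<psi> n)) \<circ> \<sigma>) k) l < \<epsilon>) sequentially"
    using l(2) ep unfolding tendsto_iff by blast
  then obtain k where k: "dist (?T (\<psi> (\<sigma> k))) 0 < \<epsilon>"
    unfolding l0 eventually_sequentially by auto
  define n where "n = \<sigma> k"
  have nT: "norm (?T (\<psi> n)) < \<epsilon>" using k unfolding n_def by (simp add: dist_norm)
  show "\<exists>R>0. \<forall>x. gmeas g t s x (UNIV - ball 0 R) \<le> \<epsilon>"
  proof (intro exI[of _ "real n + 1"] conjI allI)
    show "real n + 1 > 0" by simp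
    fix x
    let ?A = "UNIV - ball (0::real^'n) (real n + 1)"
    have int1: "integrable lborel (\<lambda>y. g t s x y * 1)" by (rule E_int(1)[OF sI bcont_const st])
    then have int1': "integrable lborel (\<lambda>y. g t s x y)" by simp
    have iA: "integrable lborel (\<lambda>y. indicator ?A y *\<^sub>R g t s x y)"
      by (rule integrable_mult_indicator[OF _ int1']) auto
    have bc: "bcont (cut n)" by (simp add: bcont_iff cut_bcontfun)
    have "gmeas g t s x ?A = (\<integral>y. indicator ?A y *\<^sub>R g t s x y \<partial>lborel)"
      by (simp add: gmeas_def set_lebesgue_integral_def)
    also have "\<dots> \<le> (\<integral>y. g t s x y * cut n y \<partial>lborel)"
    proof (rule integral_mono[OF iA E_int(1)[OF sI bc st]])
      fix y :: "real^'n"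
      have gp: "g t s x y > 0" by (rule g_pos[OF sI st])
      show "indicator ?A y *\<^sub>R g t s x y \<le> g t s x y * cut n y"
      proof (cases "y \<in> ?A")
        case True
        then have "norm y \<ge> real n + 1" by (simp add: dist_norm)
        then have "cut n y = 1" unfolding cut_def by simp
        then show ?thesis using True by simp
      next
        case False
        then show ?thesis using gp cut_range[of n y] by simp
      qed
    qed
    also have "\<dots> = E t s (cut n) x" by (rule E_int(2)[OF sI bc st, symmetric])
    also have "\<dots> = apply_bcontfun (?T (\<psi> n)) x" by (simp add: Tapp apsi)
    also have "\<dots> \<le> norm (?T (\<psi> n))" using norm_bounded[of "?T (\<psi> n)" x] by simp
    finally show "gmeas g t s x ?A \<le> \<epsilon>" using nT by linarith
  qed
qed

end

theorem proposition4p1: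
  fixes I J :: "real set" and \<alpha> :: real
    and q :: "real \<Rightarrow> real^'n::finite \<Rightarrow> real^'n^'n"
    and b :: "real \<Rightarrow> real^'n \<Rightarrow> real^'n"
    and c :: "real \<Rightarrow> real^'n \<Rightarrow> real"
    and g :: "real \<Rightarrow> real \<Rightarrow> real^'n \<Rightarrow> real^'n \<Rightarrow> real"
  assumes "standing I \<alpha> q b c"
    and "well_posed I \<alpha> q b c"
    and "green_fn I \<alpha> q b c g"
    and "is_interval J" and "J \<subseteq> I"
  shows "(\<forall>t\<in>J. \<forall>s\<in>J. s < t \<longrightarrow> compact_op (evol_op \<alpha> q b c t s))
     \<longleftrightarrow> (\<forall>t\<in>J. \<forall>s\<in>J. s < t \<longrightarrow>
            (\<forall>\<epsilon>>0. \<exists>R>0. \<forall>x. gmeas g t s x (UNIV - ball 0 R) \<le> \<epsilon>))"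
proof -
  interpret EV I \<alpha> q b c g by (rule EV.intro[OF assms(2,3)])
  have al: "\<alpha> > 0" using assms(1) unfolding standing_def by (rule conjunct1)
  show ?thesis
  proof
    assume H: "\<forall>t\<in>J. \<forall>s\<in>J. s < t \<longrightarrow> compact_op (evol_op \<alpha> q b c t s)"
    show "\<forall>t\<in>J. \<forall>s\<in>J. s < t \<longrightarrow> (\<forall>\<epsilon>>0. \<exists>R>0. \<forall>x. gmeas g t s x (UNIV - ball 0 R) \<le> \<epsilon>)"
    proof (intro ballI impI)
      fix t s assume tJ: "t \<in> J" and sJ: "s \<in> J" and st: "s < t"
      have sI: "s \<in> I" using assms(5) sJ by (rule subsetD)
      have C: "compact_op (evol_op \<alpha> q b c t s)" using H tJ sJ st by simp
      show "\<forall>\<epsilon>>0. \<exists>R>0. \<forall>x. gmeas g t s x (UNIV - ball 0 R) \<le> \<epsilon>"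
        by (rule tight_from_compact[OF sI st C])
    qed
  next
    assume H: "\<forall>t\<in>J. \<forall>s\<in>J. s < t \<longrightarrow> (\<forall>\<epsilon>>0. \<exists>R>0. \<forall>x. gmeas g t s x (UNIV - ball 0 R) \<le> \<epsilon>)"
    show "\<forall>t\<in>J. \<forall>s\<in>J. s < t \<longrightarrow> compact_op (evol_op \<alpha> q b c t s)"
    proof (intro ballI impI)
      fix t s assume tJ: "t \<in> J" and sJ: "s \<in> J" and st: "s < t"
      define r where "r = (s + t) / 2"
      have sr: "s < r" unfolding r_def using st by (simp add: field_simps)
      have rt: "r < t" unfolding r_def using st by (simp add: field_simps)
      have rJ: "r \<in> J" by (rule mem_is_interval_1_I[OF assms(4) sJ tJ less_imp_le[OF sr] less_imp_le[OF rt]])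
      have sI: "s \<in> I" using assms(5) sJ by (rule subsetD)
      have rI: "r \<in> I" using assms(5) rJ by (rule subsetD)
      have T: "\<forall>\<epsilon>>0. \<exists>R>0. \<forall>x. gmeas g t r x (UNIV - ball 0 R) \<le> \<epsilon>" using H tJ rJ rt by simp
      show "compact_op (evol_op \<alpha> q b c t s)"
        by (rule compact_from_tight[OF al sI rI sr rt T])
    qed
  qed
qed

end
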